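(* There is an absolute constant $c>0$ such that the following holds. Let $n_1,n_2,n_3\in\mathbb{Z}\setminus\{0\}$ with $|n_1|\ge|n_2|\ge|n_3|$ and set $n=n_1+n_2+n_3$. Then at least one of the following is true: (I) (resonance) $n_i=n$ for some $1\le i\le3$; (II) $|n_3|\ge c|n_1|$; (III) $|\Phi_3(n_1,n_2,n_3)|=|n^5-n_1^5-n_2^5-n_3^5|\ge c\,n_1^4$.
   Context: $\Phi_3(n_1,n_2,n_3)=n^5-n_1^5-n_2^5-n_3^5$ where $n=n_1+n_2+n_3$. The paper writes the alternatives with $\gtrsim$, meaning inequalities up to an absolute implicit constant. *)

theory Defs
  imports Complex_Main
begin

definition Phi3 :: "int \<Rightarrow> int \<Rightarrow> int \<Rightarrow> int" where
  "Phi3 n1 n2 n3 = (n1 + n2 + n3) ^ 5 - n1 ^ 5 - n2 ^ 5 - n3 ^ 5"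

end

theory Submission
  imports Defs
begin

lemma phi_fact: "Phi3 a b c = 5 * ((a+b)*(b+c)*(c+a)) * (a^2+b^2+c^2+a*b+b*c+c*a)"
  unfolding Phi3_def by algebra

lemma key:
  fixes a b c :: int
  assumes ab: "\<bar>a\<bar> \<ge> \<bar>b\<bar>" and nx: "a+b \<noteq> 0" and ny: "b+c \<noteq> 0" and nz: "c+a \<noteq> 0"
    and sm: "4*\<bar>c\<bar> < \<bar>a\<bar>"
  shows "a^4 \<le> 4*\<bar>Phi3 a b c\<bar>"
proof -
  define x where "x = a+b"
  define y where "y = b+c"
  define z where "z = c+a"
  define Q where "Q = a^2+b^2+c^2+a*b+b*c+c*a"
  have Qe: "2*Q - a^2 = b^2 + c^2 + (a+b+c)^2" unfolding Q_def by algebra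
  have Q2: "a^2 \<le> 2*Q" using Qe
    by (smt (verit) zero_le_power2)
  have hx: "\<bar>x\<bar> \<ge> 1" "\<bar>y\<bar> \<ge> 1" "\<bar>z\<bar> \<ge> 1" using nx ny nz x_def y_def z_def by auto
  have hz: "2*\<bar>z\<bar> \<ge> \<bar>a\<bar>" unfolding z_def using sm by (smt (verit))
  have P: "a^2 \<le> 8*\<bar>x*y*z\<bar>"
  proof (cases "4*\<bar>x\<bar> \<ge> \<bar>a\<bar>")
    case True
    have "a^2 = \<bar>a\<bar>*\<bar>a\<bar>" by (simp add: power2_eq_square abs_mult[symmetric])
    also have "\<dots> \<le> (4*\<bar>x\<bar>)*(2*\<bar>z\<bar>)" using True hz by (intro mult_mono) auto
    also have "\<dots> \<le> (4*\<bar>x\<bar>)*(2*\<bar>z\<bar>)*\<bar>y\<bar>" using mult_left_mono[of 1 "\<bar>y\<bar>" "(4*\<bar>x\<bar>)*(2*\<bar>z\<bar>)"] hx by simp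
    finally show ?thesis by (simp add: abs_mult ac_simps)
  next
    case False
    have hy: "2*\<bar>y\<bar> \<ge> \<bar>a\<bar>" unfolding y_def using False sm x_def ab by (smt (verit))
    have "a^2 = \<bar>a\<bar>*\<bar>a\<bar>" by (simp add: power2_eq_square abs_mult[symmetric])
    also have "\<dots> \<le> (2*\<bar>y\<bar>)*(2*\<bar>z\<bar>)" using hy hz by (intro mult_mono) auto
    also have "\<dots> \<le> (2*\<bar>y\<bar>)*(2*\<bar>z\<bar>)*\<bar>x\<bar>" using mult_left_mono[of 1 "\<bar>x\<bar>" "(2*\<bar>y\<bar>)*(2*\<bar>z\<bar>)"] hx by simp
    finally have "a^2 \<le> 4*\<bar>x*y*z\<bar>" by (simp add: abs_mult ac_simps)
    then show ?thesis by simp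
  qed
  have Qn: "Q \<ge> 0" using Q2 by (smt (verit) zero_le_power2)
  have "a^4 = a^2*a^2" by algebra
  also have "\<dots> \<le> (8*\<bar>x*y*z\<bar>)*(2*Q)" using P Q2 by (intro mult_mono) auto
  also have "\<dots> \<le> 4*\<bar>Phi3 a b c\<bar>" unfolding phi_fact x_def[symmetric] y_def[symmetric] z_def[symmetric] Q_def[symmetric]
    using Qn by (simp add: abs_mult)
  finally show ?thesis .
qed

theorem proposition3p1:
  "\<exists>c::real. c > 0 \<and>
     (\<forall>n1 n2 n3 :: int. n1 \<noteq> 0 \<longrightarrow> n2 \<noteq> 0 \<longrightarrow> n3 \<noteq> 0 \<longrightarrow>
        \<bar>n1\<bar> \<ge> \<bar>n2\<bar> \<longrightarrow> \<bar>n2\<bar> \<ge> \<bar>n3\<bar> \<longrightarrow>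
        (let n = n1 + n2 + n3 in
           (n1 = n \<or> n2 = n \<or> n3 = n)
         \<or> real_of_int \<bar>n3\<bar> \<ge> c * real_of_int \<bar>n1\<bar>
         \<or> real_of_int \<bar>Phi3 n1 n2 n3\<bar> \<ge> c * real_of_int n1 ^ 4))"
proof (intro exI[of _ "1/4"] conjI allI impI)
  fix n1 n2 n3 :: int
  assume h: "\<bar>n1\<bar> \<ge> \<bar>n2\<bar>"
  show "let n = n1 + n2 + n3 in
           (n1 = n \<or> n2 = n \<or> n3 = n)
         \<or> real_of_int \<bar>n3\<bar> \<ge> 1/4 * real_of_int \<bar>n1\<bar>
         \<or> real_of_int \<bar>Phi3 n1 n2 n3\<bar> \<ge> 1/4 * real_of_int n1 ^ 4"
  proof (cases "n1+n2 = 0 \<or> n2+n3 = 0 \<or> n3+n1 = 0 \<or> 4*\<bar>n3\<bar> \<ge> \<bar>n1\<bar>")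
    case True
    then show ?thesis unfolding Let_def by auto
  next
    case False
    then have "n1^4 \<le> 4*\<bar>Phi3 n1 n2 n3\<bar>" using key[OF h] by auto
    then have "real_of_int (n1^4) \<le> real_of_int (4*\<bar>Phi3 n1 n2 n3\<bar>)" by linarith
    then show ?thesis unfolding Let_def by simp
  qed
qed auto

end
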